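(* Let $s,r,u\in \mathcal{X}$, $s=(s_1,\dots, s_n)$, $r=(r_1,\dots, r_n)$, $u=(u_1,\dots,u_n)$, lie in pairwise different orbits with $\mathbb{F}_{q^m}=\mathbb{F}_q(r_1)=\mathbb{F}_q(s_1)$. Then there exists $F\in \mathrm{TA}_n(\mathbb{F}_q)$ such that $F([r])=[s]$ and $F([u])=[u]$.
   Context: Fix $m$, a prime power $q$, $n\geq 3$. $\Delta=\mathrm{Gal}(\mathbb{F}_{q^m}:\mathbb{F}_q)$ acts coordinatewise on $\mathbb{F}_{q^m}^n$; $[v]$ denotes the $\Delta$-orbit of $v$, and $\mathcal{X}$ is the union of orbits of size $m$. $\mathrm{TA}_n(\mathbb{F}_q)$ is the tame automorphism group generated by invertible affine maps and triangular maps $(a_1X_1+f_1,\dots,a_nX_n+f_n)$, $a_i\in\mathbb{F}_q^*$, $f_i\in\mathbb{F}_q[X_{i+1},\dots,X_n]$; it acts on orbits since its elements commute with $\Delta$. *)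

theory Defs
  imports "Jordan_Normal_Form.Determinant"
begin

(* The ambient field F_{q^m} is a finite field type 'a with CARD('a) = q^m.
   F_q is its unique subfield of order q, i.e. the fixed field of x \<mapsto> x^q. *)
definition Fq :: "nat \<Rightarrow> 'a::field set" where
  "Fq q = {x. x ^ q = x}"

definition is_subfield :: "'a::field set \<Rightarrow> bool" where
  "is_subfield L \<longleftrightarrow> 0 \<in> L \<and> 1 \<in> L \<and>
     (\<forall>x\<in>L. \<forall>y\<in>L. x + y \<in> L \<and> x * y \<in> L) \<and>
     (\<forall>x\<in>L. - x \<in> L) \<and> (\<forall>x\<in>L. x \<noteq> 0 \<longrightarrow> inverse x \<in> L)"

definition gen_field :: "nat \<Rightarrow> 'a::field set \<Rightarrow> 'a set" where
  "gen_field q S = \<Inter> {L. is_subfield L \<and> Fq q \<subseteq> L \<and> S \<subseteq> L}"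

(* Coordinatewise action of the Galois group Gal(F_{q^m}:F_q) = <x \<mapsto> x^q>
   on points (vectors of dimension n, coordinates indexed 0..n-1). *)
definition gal_orbit :: "nat \<Rightarrow> 'a::field vec \<Rightarrow> 'a vec set" where
  "gal_orbit q v = {map_vec (\<lambda>x. x ^ (q ^ k)) v | k. True}"

definition calX :: "nat \<Rightarrow> nat \<Rightarrow> nat \<Rightarrow> 'a::field vec set" where
  "calX q m n = {v \<in> carrier_vec n. card (gal_orbit q v) = m}"

inductive polyfun :: "nat \<Rightarrow> nat set \<Rightarrow> ('a::field vec \<Rightarrow> 'a) \<Rightarrow> bool"
  for q :: nat and I :: "nat set" where
  pconst: "c \<in> Fq q \<Longrightarrow> polyfun q I (\<lambda>v. c)"
| pvar: "i \<in> I \<Longrightarrow> polyfun q I (\<lambda>v. v $ i)"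
| padd: "polyfun q I f \<Longrightarrow> polyfun q I g \<Longrightarrow> polyfun q I (\<lambda>v. f v + g v)"
| pmult: "polyfun q I f \<Longrightarrow> polyfun q I g \<Longrightarrow> polyfun q I (\<lambda>v. f v * g v)"

(* The tame automorphism group TA_n(F_q), as maps acting on F_{q^m}^n:
   generated by invertible affine maps and triangular maps over F_q
   (coordinates 0..n-1; the i-th component is a_i X_i + f_i(X_{i+1},...,X_{n-1})). *)
inductive tame :: "nat \<Rightarrow> nat \<Rightarrow> ('a::field vec \<Rightarrow> 'a vec) \<Rightarrow> bool"
  for q :: nat and n :: nat where
  affine: "A \<in> carrier_mat n n \<Longrightarrow> det A \<noteq> 0 \<Longrightarrow>
     (\<forall>i<n. \<forall>j<n. A $$ (i, j) \<in> Fq q) \<Longrightarrow>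
     b \<in> carrier_vec n \<Longrightarrow> (\<forall>i<n. b $ i \<in> Fq q) \<Longrightarrow>
     tame q n (\<lambda>v. A *\<^sub>v v + b)"
| triangular: "(\<forall>i<n. a i \<in> Fq q \<and> a i \<noteq> 0 \<and> polyfun q {Suc i..<n} (f i)) \<Longrightarrow>
     tame q n (\<lambda>v. vec n (\<lambda>i. a i * v $ i + f i v))"
| comp: "tame q n F \<Longrightarrow> tame q n G \<Longrightarrow> tame q n (F \<circ> G)"
| inverse: "tame q n F \<Longrightarrow> tame q n (inv_into (carrier_vec n) F)"

end

theory Submission imports Defs "HOL-Computational_Algebra.Polynomial" "HOL-Number_Theory.Residues" begin


lemma fin_pow_card:
  fixes x :: "'a::{field,finite}"
  shows "x ^ card (UNIV :: 'a set) = x"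
proof (cases "x = 0")
  case False
  have "x * (\<Prod>y\<in>UNIV-{0}. x * y) = x * x ^ (card (UNIV :: 'a set) - 1) * \<Prod>(UNIV-{0})"
    by (simp add: prod.distrib mult_ac)
  also have "x * x ^ (card (UNIV :: 'a set) - 1) = x ^ Suc (card (UNIV :: 'a set) - 1)"
    by (subst power_Suc) auto
  also have "Suc (card (UNIV :: 'a set) - 1) = card (UNIV :: 'a set)"
    using finite_UNIV_card_ge_0[where ?'a = 'a] by simp
  also have "(\<Prod>y\<in>UNIV-{0}. x * y) = (\<Prod>y\<in>UNIV-{0}. y)"
    by (rule prod.reindex_bij_witness[of _ "\<lambda>y. y / x" "\<lambda>y. x * y"]) (use False in auto)
  finally show ?thesis
    by simp
qed (use finite_UNIV_card_ge_0[where ?'a = 'a] in auto)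

locale ffield =
  fixes q m :: nat and ty :: "'a::{field,finite} itself"
  assumes qpp: "\<exists>p k. prime p \<and> k > 0 \<and> q = p ^ k"
    and mpos: "m > 0"
    and cardq: "card (UNIV :: 'a set) = q ^ m"
begin

lemma q_ge2: "q \<ge> 2"
proof -
  obtain p k where "prime p" "k > 0" "q = p ^ k" using qpp by blast
  then have "p \<ge> 2" by (simp add: prime_ge_2_nat)
  then have "p ^ k \<ge> 2 ^ k" by (simp add: power_mono)
  moreover have "(2::nat) ^ k \<ge> 2" using \<open>k>0\<close>
    by (metis One_nat_def Suc_leI power_increasing power_one_right one_le_numeral)
  ultimately show ?thesis using \<open>q = p^k\<close> by simp
qed

lemma char_q: "\<exists>k. q = CHAR('a) ^ k"
proof -
  obtain p k where p: "prime p" "k > 0" "q = p ^ k" using qpp by blast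
  have fin: "finite (UNIV :: 'a set)" by simp
  have cp: "prime CHAR('a)"
    using prime_CHAR_semidom finite_imp_CHAR_pos[OF fin] by blast
  have "CHAR('a) dvd p ^ (k * m)" using CHAR_dvd_CARD[where 'a='a] cardq p
    by (simp add: power_mult)
  then have "CHAR('a) dvd p" using cp prime_dvd_power by blast
  then have "CHAR('a) = p" using p(1) cp
    by (metis prime_nat_iff prime_gt_1_nat less_irrefl)
  then show ?thesis using p by blast
qed

lemma charprime: "prime CHAR('a)"
proof -
  have fin: "finite (UNIV :: 'a set)" by simp
  show ?thesis using prime_CHAR_semidom finite_imp_CHAR_pos[OF fin] by blast
qed

lemma add_pow: "((x::'a) + y) ^ (q ^ k) = x ^ (q ^ k) + y ^ (q ^ k)"
proof -
  obtain j where "q = CHAR('a) ^ j" using char_q by blast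
  then have "q ^ k = CHAR('a) ^ (j * k)" by (simp add: power_mult)
  then show ?thesis using freshmans_dream'[OF charprime] by blast
qed

lemma q_pos: "q > 0" using q_ge2 by simp
lemma qk_pos: "q ^ k > 0" using q_ge2 by simp

lemma neg_pow: "(- (x::'a)) ^ (q ^ k) = - (x ^ (q ^ k))"
proof -
  have "(x + - x) ^ (q^k) = x ^ (q^k) + (-x)^(q^k)" by (rule add_pow)
  then have "0 = x ^ (q^k) + (-x)^(q^k)" using q_pos by (simp add: power_0_left)
  then show ?thesis by (simp add: eq_neg_iff_add_eq_0 add.commute)
qed

lemma sub_pow: "((x::'a) - y) ^ (q ^ k) = x ^ (q ^ k) - y ^ (q ^ k)"
  using add_pow[of x "-y" k] neg_pow[of y k] by simp

lemma mult_pow: "((x::'a) * y) ^ (q ^ k) = x ^ (q ^ k) * y ^ (q ^ k)"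
  by (simp add: power_mult_distrib)

lemma sum_pow: "(sum (g :: _ \<Rightarrow> 'a) A) ^ (q ^ k) = sum (\<lambda>i. g i ^ (q ^ k)) A"
  by (induction A rule: infinite_finite_induct) (auto simp: add_pow q_pos power_0_left)

lemma period: "(x::'a) ^ (q ^ m) = x"
  using fin_pow_card[of x] cardq by simp

lemma pow_pow: "((x::'a) ^ (q ^ a)) ^ (q ^ b) = x ^ (q ^ (a + b))"
  by (simp add: power_mult[symmetric] power_add mult.commute)

lemma period_mult: "(x::'a) ^ (q ^ (m * c)) = x"
proof (induction c)
  case (Suc c)
  have "x ^ (q ^ (m * Suc c)) = (x ^ (q ^ (m * c))) ^ (q ^ m)"
    by (simp add: pow_pow add.commute)
  then show ?case using Suc period by simp
qed simp

lemma pow_inj: "(x::'a) ^ (q ^ k) = y ^ (q ^ k) \<Longrightarrow> x = y"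
proof -
  assume "x ^ (q ^ k) = y ^ (q ^ k)"
  then have "(x - y) ^ (q ^ k) = 0" by (simp add: sub_pow)
  then show "x = y" by simp
qed

lemma Fq_pow: "c \<in> Fq q \<Longrightarrow> (c::'a) ^ (q ^ k) = c"
proof (induction k)
  case (Suc k)
  have "c ^ (q ^ Suc k) = (c ^ (q ^ k)) ^ q" by (metis power_Suc2 power_mult)
  then show ?case using Suc by (simp add: Fq_def)
qed simp

lemma Fq_0: "(0::'a) \<in> Fq q" using q_ge2 by (simp add: Fq_def)
lemma Fq_1: "(1::'a) \<in> Fq q" by (simp add: Fq_def)
lemma Fq_neg: "(c::'a) \<in> Fq q \<Longrightarrow> - c \<in> Fq q"
  using neg_pow[of c 1] by (simp add: Fq_def)
lemma Fq_iff: "(c::'a) \<in> Fq q \<longleftrightarrow> c ^ q = c" by (simp add: Fq_def)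

end



lemma polyfun_mono: "polyfun q I f \<Longrightarrow> I \<subseteq> J \<Longrightarrow> polyfun q J f"
  by (induction rule: polyfun.induct) (auto intro: polyfun.intros)

lemma polyfun_local: "polyfun q I f \<Longrightarrow> (\<forall>i\<in>I. x $ i = y $ i) \<Longrightarrow> f x = f y"
  by (induction rule: polyfun.induct) auto

lemma polyfun_subst:
  "polyfun q I f \<Longrightarrow> (\<forall>j\<in>I. j < n) \<Longrightarrow> polyfun q (\<sigma> ` I) (\<lambda>y. f (vec n (\<lambda>j. y $ \<sigma> j)))"
proof (induction rule: polyfun.induct)
  case (pconst c) then show ?case by (auto intro: polyfun.intros)
next
  case (pvar i)
  then have "(\<lambda>y. vec n (\<lambda>j. y $ \<sigma> j) $ i) = (\<lambda>y. y $ \<sigma> i)" by auto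
  then show ?case using pvar by (auto intro: polyfun.pvar)
next
  case (padd f g) then show ?case by (auto intro: polyfun.padd)
next
  case (pmult f g) then show ?case by (auto intro: polyfun.pmult)
qed

context ffield begin

lemma polyfun_neg: "polyfun q I (f :: 'a vec \<Rightarrow> 'a) \<Longrightarrow> polyfun q I (\<lambda>v. - f v)"
proof -
  assume "polyfun q I f"
  then have "polyfun q I (\<lambda>v. (\<lambda>v. - 1) v * f v)"
    by (rule polyfun.pmult[OF polyfun.pconst[OF Fq_neg[OF Fq_1]]])
  then show ?thesis by simp
qed

lemma polyfun_sub: "polyfun q I (f :: 'a vec \<Rightarrow> 'a) \<Longrightarrow> polyfun q I g \<Longrightarrow> polyfun q I (\<lambda>v. f v - g v)"
proof -
  assume a: "polyfun q I f" "polyfun q I g"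
  have "polyfun q I (\<lambda>v. f v + (- g v))" by (rule polyfun.padd[OF a(1) polyfun_neg[OF a(2)]])
  then show ?thesis by simp
qed

lemma polyfun_pow: "polyfun q I (f :: 'a vec \<Rightarrow> 'a) \<Longrightarrow> polyfun q I (\<lambda>v. f v ^ k)"
proof (induction k)
  case 0 then show ?case using polyfun.pconst[OF Fq_1] by simp
next
  case (Suc k)
  then show ?case using polyfun.pmult[OF Suc.prems Suc.IH[OF Suc.prems]] by simp
qed

lemma polyfun_frob:
  "polyfun q I (f :: 'a vec \<Rightarrow> 'a) \<Longrightarrow> (\<forall>i\<in>I. i < dim_vec x) \<Longrightarrow>
     f (map_vec (\<lambda>y. y ^ (q ^ k)) x) = (f x) ^ (q ^ k)"
  by (induction rule: polyfun.induct) (auto simp: Fq_pow add_pow mult_pow)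

lemma polyfun_poly:
  "(\<forall>i. Polynomial.coeff P i \<in> Fq q) \<Longrightarrow> j \<in> I \<Longrightarrow> polyfun q I (\<lambda>x. poly (P :: 'a poly) (x $ j))"
proof (induction P rule: pCons_induct)
  case 0 then show ?case using polyfun.pconst[OF Fq_0] by simp
next
  case (pCons a p)
  have a: "a \<in> Fq q" using pCons.prems(1)[rule_format, of 0] by simp
  have "\<forall>i. Polynomial.coeff p i \<in> Fq q" proof fix i show "Polynomial.coeff p i \<in> Fq q" using pCons.prems(1)[rule_format, of "Suc i"] by simp qed
  then have "polyfun q I (\<lambda>x. poly p (x $ j))" using pCons by blast
  then have "polyfun q I (\<lambda>x. (\<lambda>x. a) x + (\<lambda>x. x $ j) x * poly p (x $ j))"
    by (intro polyfun.padd polyfun.pmult polyfun.pconst polyfun.pvar a pCons.prems(2))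
  then show ?case by simp
qed

lemma card_ge2: "card (UNIV :: 'a set) \<ge> 2"
proof -
  have "q ^ m \<ge> q ^ 1" using mpos q_pos by (intro power_increasing) auto
  then show ?thesis using cardq q_ge2 by simp
qed

lemma nonzero_pow: "(y::'a) \<noteq> 0 \<Longrightarrow> y ^ (card (UNIV :: 'a set) - 1) = 1"
proof -
  assume y: "y \<noteq> 0"
  obtain N where N: "card (UNIV :: 'a set) = Suc N" using card_ge2 by (cases "card (UNIV :: 'a set)") auto
  have "y * y ^ (card (UNIV :: 'a set) - 1) = y ^ card (UNIV :: 'a set)"
    unfolding N by simp
  then show ?thesis using fin_pow_card[of y] y by simp
qed

lemma zero_pow: "(0::'a) ^ (card (UNIV :: 'a set) - 1) = 0"
  using card_ge2 by simp

lemma memS: "polyfun q I g \<Longrightarrow> x = g v \<Longrightarrow> x \<in> {g v | g. polyfun q I g}"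
  by blast

lemma generator:
  assumes gen: "gen_field q {v $ j} = (UNIV :: 'a set)" and j: "j \<in> I"
  shows "\<exists>g. polyfun q I g \<and> g v = a"
proof -
  define S where "S = {g v | g. polyfun q I g}"
  have sub: "is_subfield S"
    unfolding is_subfield_def
  proof (intro conjI ballI impI)
    show "0 \<in> S" unfolding S_def by (rule memS[OF polyfun.pconst[OF Fq_0]]) simp
    show "1 \<in> S" unfolding S_def by (rule memS[OF polyfun.pconst[OF Fq_1]]) simp
  next
    fix x y assume "x \<in> S" "y \<in> S"
    then obtain f g where fg: "polyfun q I f" "x = f v" "polyfun q I g" "y = g v" unfolding S_def by blast
    show "x + y \<in> S" unfolding S_def by (rule memS[OF polyfun.padd[OF fg(1,3)]]) (simp add: fg)
    show "x * y \<in> S" unfolding S_def by (rule memS[OF polyfun.pmult[OF fg(1,3)]]) (simp add: fg)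
  next
    fix x assume "x \<in> S"
    then obtain f where f: "polyfun q I f" "x = f v" unfolding S_def by blast
    show "- x \<in> S" unfolding S_def by (rule memS[OF polyfun_neg[OF f(1)]]) (simp add: f)
    assume "x \<noteq> 0"
    obtain N where N: "card (UNIV :: 'a set) = Suc (Suc N)" using card_ge2
      by (metis add_2_eq_Suc le_Suc_ex)
    have "x * x ^ (card (UNIV :: 'a set) - 2) = x ^ (card (UNIV :: 'a set) - 1)"
      unfolding N by simp
    then have "inverse x = x ^ (card (UNIV :: 'a set) - 2)"
      using nonzero_pow[OF \<open>x \<noteq> 0\<close>] \<open>x \<noteq> 0\<close> by (simp add: field_simps)
    then show "inverse x \<in> S" unfolding S_def
      using memS[OF polyfun_pow[OF f(1), where k="card (UNIV :: 'a set) - 2"], where x="inverse x" and v=v] f(2) by simp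
  qed
  have "Fq q \<subseteq> S"
  proof
    fix c :: 'a assume "c \<in> Fq q"
    then show "c \<in> S" unfolding S_def by (rule memS[OF polyfun.pconst]) simp
  qed
  moreover have "{v $ j} \<subseteq> S" unfolding S_def using memS[OF polyfun.pvar[OF j], where x="v $ j" and v=v] by simp
  ultimately have "gen_field q {v $ j} \<subseteq> S" unfolding gen_field_def using sub by blast
  then have "a \<in> S" using gen by blast
  then show ?thesis unfolding S_def by blast
qed

end



context ffield begin

abbreviation phi :: "'a \<Rightarrow> 'a" where "phi x \<equiv> x ^ q"

lemma sum_pow1: "(sum (g :: _ \<Rightarrow> 'a) A) ^ q = sum (\<lambda>i. g i ^ q) A"
  using sum_pow[of g A 1] by simp
lemma mult_pow1: "((x::'a) * y) ^ q = x ^ q * y ^ q"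
  by (simp add: power_mult_distrib)

lemma phi0: "phi 0 = 0" using q_pos by simp

lemma map_poly_phi_mult: "map_poly phi (p * r) = map_poly phi p * map_poly phi r"
proof (rule Polynomial.poly_eqI)
  fix n
  show "Polynomial.coeff (map_poly phi (p * r)) n = Polynomial.coeff (map_poly phi p * map_poly phi r) n"
    by (simp only: Polynomial.coeff_map_poly[of phi, OF phi0] Polynomial.coeff_mult sum_pow1 mult_pow1)
qed

lemma map_poly_phi_prod: "map_poly phi (\<Prod>k<(K::nat). g k) = (\<Prod>k<K. map_poly phi (g k))"
proof (induction K)
  case 0 then show ?case by (simp add: map_poly_1')
next
  case (Suc K) then show ?case by (simp add: map_poly_phi_mult)
qed

lemma minpoly_exists:
  fixes c :: 'a
  assumes "j \<in> I"
  shows "\<exists>Q. polyfun q I Q \<and> (\<forall>x. Q x = (\<Prod>k<m. x $ j - c ^ (q ^ k)))"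
proof -
  define g where "g k = [: - (c ^ (q ^ k)), 1 :]" for k
  define P where "P = (\<Prod>k<m. g k)"
  have mg: "map_poly phi (g k) = g (Suc k)" for k
  proof -
    have "map_poly phi (g k) = [: phi (- (c ^ (q ^ k))), phi 1:]"
      unfolding g_def by (simp add: map_poly_pCons[of phi, OF phi0])
    also have "phi (- (c ^ (q ^ k))) = - (c ^ (q ^ Suc k))"
      using neg_pow[of "c ^ (q ^ k)" 1] pow_pow[of c k 1] by simp
    finally show ?thesis unfolding g_def by simp
  qed
  obtain m' where m': "m = Suc m'" using mpos by (cases m) auto
  have gm: "g m = g 0" unfolding g_def using period by simp
  have "map_poly phi P = (\<Prod>k<m. g (Suc k))" unfolding P_def map_poly_phi_prod mg ..
  also have "\<dots> = (\<Prod>k<m'. g (Suc k)) * g m" unfolding m' by simp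
  also have "\<dots> = g 0 * (\<Prod>k<m'. g (Suc k))" using gm by (simp add: mult.commute)
  also have "\<dots> = P" unfolding P_def m' by (rule prod.lessThan_Suc_shift[symmetric])
  finally have fx: "map_poly phi P = P" .
  have cf: "\<forall>i. Polynomial.coeff P i \<in> Fq q"
  proof
    fix i
    have "Polynomial.coeff (map_poly phi P) i = phi (Polynomial.coeff P i)"
      by (rule Polynomial.coeff_map_poly[of phi, OF phi0])
    then show "Polynomial.coeff P i \<in> Fq q" using fx by (simp add: Fq_def)
  qed
  have "\<forall>x. poly P (x $ j) = (\<Prod>k<m. x $ j - c ^ (q ^ k))"
    unfolding P_def g_def by (simp add: poly_prod)
  then show ?thesis using polyfun_poly[OF cf assms] by metis
qed

end



definition swapn :: "nat \<Rightarrow> nat \<Rightarrow> nat" where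
  "swapn i j = (if j = 0 then i else if j = i then 0 else j)"

lemma swapn_lt: "i < n \<Longrightarrow> j < n \<Longrightarrow> swapn i j < n"
  by (simp add: swapn_def)

lemma swapn_swapn: "swapn i (swapn i j) = j"
  by (simp add: swapn_def)

lemma swapn_0: "swapn i j = 0 \<longleftrightarrow> j = i"
  by (auto simp: swapn_def)

definition permA :: "nat \<Rightarrow> nat \<Rightarrow> 'a::field mat" where
  "permA n i = mat n n (\<lambda>(j,k). if k = swapn i j then 1 else 0)"

definition Rv :: "nat \<Rightarrow> nat \<Rightarrow> 'a vec \<Rightarrow> 'a vec" where
  "Rv n i y = vec n (\<lambda>j. y $ swapn i j)"

lemma permA_carrier: "permA n i \<in> carrier_mat n n"
  by (simp add: permA_def)

lemma permA_vec:
  assumes x: "(x :: 'a::field vec) \<in> carrier_vec n" and i: "i < n"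
  shows "permA n i *\<^sub>v x = Rv n i x"
proof (rule eq_vecI)
  show "dim_vec (permA n i *\<^sub>v x) = dim_vec (Rv n i x)" by (simp add: permA_def Rv_def)
  fix j assume "j < dim_vec (Rv n i x)"
  then have j: "j < n" by (simp add: Rv_def)
  have "(permA n i *\<^sub>v x) $ j = (\<Sum>k\<in>{0..<n}. (if k = swapn i j then 1 else 0) * x $ k)"
    using j x by (simp add: permA_def scalar_prod_def)
  also have "\<dots> = (\<Sum>k\<in>{0..<n}. if k = swapn i j then x $ k else 0)"
    by (rule sum.cong) auto
  also have "\<dots> = x $ swapn i j" using swapn_lt[OF i j] by simp
  finally show "(permA n i *\<^sub>v x) $ j = Rv n i x $ j" using j by (simp add: Rv_def)
qed

lemma permA_sq:
  assumes i: "i < n"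
  shows "permA n i * permA n i = (1\<^sub>m n :: 'a::field mat)"
proof (rule eq_matI)
  fix j k assume "j < dim_row (1\<^sub>m n :: 'a mat)" "k < dim_col (1\<^sub>m n :: 'a mat)"
  then have jk: "j < n" "k < n" by auto
  have "(permA n i * permA n i) $$ (j, k) = (\<Sum>l\<in>{0..<n}. (if l = swapn i j then 1 else 0) * (if k = swapn i l then (1::'a) else 0))"
    using jk by (simp add: permA_def scalar_prod_def)
  also have "\<dots> = (\<Sum>l\<in>{0..<n}. if l = swapn i j then (if k = swapn i l then (1::'a) else 0) else 0)"
    by (rule sum.cong) auto
  also have "\<dots> = (if k = j then 1 else 0)" using swapn_lt[OF i jk(1)] by (simp add: swapn_swapn)
  finally show "(permA n i * permA n i) $$ (j, k) = (1\<^sub>m n :: 'a mat) $$ (j, k)" using jk by simp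
qed (auto simp: permA_def)

lemma permA_det: "i < n \<Longrightarrow> det (permA n i :: 'a::field mat) \<noteq> 0"
proof
  assume i: "i < n" and d: "det (permA n i :: 'a::field mat) = 0"
  have "det (permA n i * permA n i :: 'a mat) = det (permA n i) * det (permA n i)"
    by (rule det_mult[OF permA_carrier permA_carrier])
  then have "det (permA n i * permA n i :: 'a mat) = 0" using d by simp
  then have "det (1\<^sub>m n :: 'a mat) = 0" unfolding permA_sq[OF i] .
  then show False by simp
qed

lemma Rv_Rv: "x \<in> carrier_vec n \<Longrightarrow> i < n \<Longrightarrow> Rv n i (Rv n i x) = x"
  by (intro eq_vecI) (auto simp: Rv_def swapn_lt swapn_swapn)

definition Tm :: "nat \<Rightarrow> ('a::field vec \<Rightarrow> 'a) \<Rightarrow> 'a vec \<Rightarrow> 'a vec" where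
  "Tm n g = (\<lambda>v. vec n (\<lambda>j. 1 * v $ j + (if j = 0 then g v else 0)))"

definition Pm :: "nat \<Rightarrow> nat \<Rightarrow> 'a::field vec \<Rightarrow> 'a vec" where
  "Pm n i = (\<lambda>v. permA n i *\<^sub>v v + 0\<^sub>v n)"

definition Elem :: "nat \<Rightarrow> nat \<Rightarrow> ('a::field vec \<Rightarrow> 'a) \<Rightarrow> 'a vec \<Rightarrow> 'a vec" where
  "Elem n i g = Pm n i \<circ> Tm n (\<lambda>y. g (Rv n i y)) \<circ> Pm n i"

lemma Elem_apply:
  assumes x: "x \<in> carrier_vec n" and i: "i < n"
  shows "Elem n i g x = vec n (\<lambda>j. if j = i then x $ j + g x else x $ j)"
proof -
  have p1: "Pm n i x = Rv n i x" using x i by (simp add: Pm_def permA_vec Rv_def)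
  define y where "y = Tm n (\<lambda>y. g (Rv n i y)) (Rv n i x)"
  have y: "y \<in> carrier_vec n" by (simp add: y_def Tm_def)
  have "Elem n i g x = Pm n i y" by (simp add: Elem_def p1 y_def)
  also have "\<dots> = Rv n i y" using y i by (simp add: Pm_def permA_vec Rv_def)
  also have "\<dots> = vec n (\<lambda>j. if j = i then x $ j + g x else x $ j)"
  proof (rule eq_vecI)
    fix j assume "j < dim_vec (vec n (\<lambda>j. if j = i then x $ j + g x else x $ j))"
    then have j: "j < n" by simp
    have sj: "swapn i j < n" using swapn_lt[OF i j] .
    show "Rv n i y $ j = vec n (\<lambda>j. if j = i then x $ j + g x else x $ j) $ j"
      using j sj Rv_Rv[OF x i] by (simp add: Rv_def y_def Tm_def swapn_swapn swapn_0)
  qed (simp add: Rv_def)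
  finally show ?thesis .
qed

context ffield begin

lemma tame_Pm: "i < n \<Longrightarrow> tame q n (Pm n i :: 'a vec \<Rightarrow> 'a vec)"
  unfolding Pm_def
  by (rule tame.affine[OF permA_carrier permA_det]) (auto simp: permA_def Fq_0 Fq_1)

lemma tame_Tm: "polyfun q {Suc 0..<n} g \<Longrightarrow> tame q n (Tm n (g :: 'a vec \<Rightarrow> 'a))"
proof -
  assume g: "polyfun q {Suc 0..<n} g"
  have "tame q n (\<lambda>v. vec n (\<lambda>j. (\<lambda>_. 1) j * v $ j + (\<lambda>j v. if j = 0 then g v else 0) j v))"
  proof (rule tame.triangular, intro allI impI conjI)
    fix j assume "j < n"
    show "(1::'a) \<in> Fq q" by (rule Fq_1)
    show "(1::'a) \<noteq> 0" by simp
    show "polyfun q {Suc j..<n} (\<lambda>v. if j = 0 then g v else 0)"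
    proof (cases "j = 0")
      case True then show ?thesis using g by simp
    next
      case False then show ?thesis using polyfun.pconst[OF Fq_0] by simp
    qed
  qed
  then show ?thesis by (simp add: Tm_def)
qed

lemma tame_Elem:
  assumes i: "i < n" and g: "polyfun q ({..<n} - {i}) (g :: 'a vec \<Rightarrow> 'a)"
  shows "tame q n (Elem n i g)"
proof -
  have "polyfun q (swapn i ` ({..<n} - {i})) (\<lambda>y. g (vec n (\<lambda>j. y $ swapn i j)))"
    by (rule polyfun_subst[OF g]) auto
  moreover have "swapn i ` ({..<n} - {i}) \<subseteq> {Suc 0..<n}"
    using i by (auto simp: swapn_def)
  ultimately have "polyfun q {Suc 0..<n} (\<lambda>y. g (Rv n i y))"
    unfolding Rv_def by (rule polyfun_mono)
  then show ?thesis unfolding Elem_def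
    by (intro tame.comp tame_Pm tame_Tm i)
qed

end



context ffield begin

definition fr :: "nat \<Rightarrow> 'a vec \<Rightarrow> 'a vec" where
  "fr k x = map_vec (\<lambda>y. y ^ (q ^ k)) x"

lemma fr_carrier: "x \<in> carrier_vec n \<Longrightarrow> fr k x \<in> carrier_vec n"
  by (simp add: fr_def)

lemma fr_index: "j < dim_vec x \<Longrightarrow> fr k x $ j = (x $ j) ^ (q ^ k)"
  by (simp add: fr_def)

definition Good :: "nat \<Rightarrow> 'a vec \<Rightarrow> ('a vec \<Rightarrow> 'a vec) \<Rightarrow> bool" where
  "Good n u F \<longleftrightarrow> tame q n F \<and> (\<forall>x\<in>carrier_vec n. F x \<in> carrier_vec n) \<and>
     inj_on F (carrier_vec n) \<and> (\<forall>x\<in>carrier_vec n. \<forall>k. F (fr k x) = fr k (F x)) \<and> F u = u"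

lemma Good_comp: "Good n u F \<Longrightarrow> Good n u G \<Longrightarrow> Good n u (F \<circ> G)"
  unfolding Good_def
proof (intro conjI)
  assume F: "tame q n F \<and> (\<forall>x\<in>carrier_vec n. F x \<in> carrier_vec n) \<and>
     inj_on F (carrier_vec n) \<and> (\<forall>x\<in>carrier_vec n. \<forall>k. F (fr k x) = fr k (F x)) \<and> F u = u"
  assume G: "tame q n G \<and> (\<forall>x\<in>carrier_vec n. G x \<in> carrier_vec n) \<and>
     inj_on G (carrier_vec n) \<and> (\<forall>x\<in>carrier_vec n. \<forall>k. G (fr k x) = fr k (G x)) \<and> G u = u"
  show "tame q n (F \<circ> G)" using F G by (simp add: tame.comp)
  show "\<forall>x\<in>carrier_vec n. (F \<circ> G) x \<in> carrier_vec n" using F G by simp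
  show "inj_on (F \<circ> G) (carrier_vec n)" using F G
    by (metis comp_inj_on inj_on_subset image_subsetI)
  show "\<forall>x\<in>carrier_vec n. \<forall>k. (F \<circ> G) (fr k x) = fr k ((F \<circ> G) x)" using F G by simp
  show "(F \<circ> G) u = u" using F G by simp
qed

lemma Good_id: "u \<in> carrier_vec n \<Longrightarrow> Good n u (\<lambda>v::'a vec. 1\<^sub>m n *\<^sub>v v + 0\<^sub>v n)"
  unfolding Good_def
  apply (intro conjI)
      apply (rule tame.affine; auto simp: Fq_0 Fq_1)
     apply auto[1]
    apply (rule inj_onI; simp)
   apply (auto simp: fr_carrier)
  done

lemma Good_Elem:
  assumes u: "u \<in> carrier_vec n" and i: "i < n"
    and g: "polyfun q ({..<n} - {i}) g" and gu: "g u = 0"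
  shows "Good n u (Elem n i g)"
  unfolding Good_def
proof (intro conjI)
  show "tame q n (Elem n i g)" by (rule tame_Elem[OF i g])
  show "\<forall>x\<in>carrier_vec n. Elem n i g x \<in> carrier_vec n" using i by (simp add: Elem_apply)
  show "inj_on (Elem n i g) (carrier_vec n)"
  proof (rule inj_onI)
    fix x y :: "'a vec" assume x: "x \<in> carrier_vec n" and y: "y \<in> carrier_vec n" and e: "Elem n i g x = Elem n i g y"
    have e': "vec n (\<lambda>j. if j = i then x $ j + g x else x $ j) = vec n (\<lambda>j. if j = i then y $ j + g y else y $ j)"
      using e Elem_apply[OF x i] Elem_apply[OF y i] by simp
    have oth: "x $ j = y $ j" if "j < n" "j \<noteq> i" for j
      using arg_cong[OF e', of "\<lambda>w. w $ j"] that by simp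
    have "g x = g y" by (rule polyfun_local[OF g]) (use oth in auto)
    moreover have "x $ i + g x = y $ i + g y" using arg_cong[OF e', of "\<lambda>w. w $ i"] i by simp
    ultimately have "x $ i = y $ i" by simp
    show "x = y"
    proof (rule eq_vecI)
      fix j assume "j < dim_vec y"
      then show "x $ j = y $ j" using y oth \<open>x $ i = y $ i\<close> by (cases "j = i") auto
    qed (use x y in simp)
  qed
  show "\<forall>x\<in>carrier_vec n. \<forall>k. Elem n i g (fr k x) = fr k (Elem n i g x)"
  proof (intro ballI allI)
    fix x :: "'a vec" and k assume x: "x \<in> carrier_vec n"
    have "\<forall>j\<in>{..<n} - {i}. j < dim_vec x" using x by auto
    then have gf: "g (fr k x) = (g x) ^ (q ^ k)" unfolding fr_def
      using polyfun_frob[OF g] by blast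
    have e1: "Elem n i g (fr k x) = vec n (\<lambda>j. if j = i then fr k x $ j + g (fr k x) else fr k x $ j)"
      by (rule Elem_apply[OF fr_carrier[OF x] i])
    have e2: "Elem n i g x = vec n (\<lambda>j. if j = i then x $ j + g x else x $ j)"
      by (rule Elem_apply[OF x i])
    show "Elem n i g (fr k x) = fr k (Elem n i g x)"
      unfolding e1 e2 gf
    proof (rule eq_vecI)
      fix j assume "j < dim_vec (fr k (vec n (\<lambda>j. if j = i then x $ j + g x else x $ j)))"
      then have j: "j < n" by (simp add: fr_def)
      then show "vec n (\<lambda>j. if j = i then fr k x $ j + g x ^ q ^ k else fr k x $ j) $ j =
         fr k (vec n (\<lambda>j. if j = i then x $ j + g x else x $ j)) $ j"
        using x by (simp add: fr_index add_pow)
    qed (simp add: fr_def)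
  qed
  show "Elem n i g u = u" using u i gu by (intro eq_vecI) (auto simp: Elem_apply)
qed

lemma move:
  assumes u: "u \<in> carrier_vec n" and v: "v \<in> carrier_vec n" and i: "i < n" and j: "j < n" "j \<noteq> i"
    and gen: "gen_field q {v $ j} = UNIV"
    and h: "polyfun q ({..<n} - {i}) h" "h v = 1" "h u = 0"
  shows "\<exists>E. Good n u E \<and> E v = vec n (\<lambda>l. if l = i then a else v $ l)"
proof -
  obtain g where g: "polyfun q ({..<n} - {i}) g" "g v = a - v $ i"
    using generator[OF gen, of "{..<n} - {i}" "a - v $ i"] j by auto
  define f where "f = (\<lambda>x. g x * h x)"
  have f: "polyfun q ({..<n} - {i}) f" unfolding f_def by (rule polyfun.pmult[OF g(1) h(1)])
  have fu: "f u = 0" using h by (simp add: f_def)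
  have "Elem n i f v = vec n (\<lambda>l. if l = i then a else v $ l)"
    using v i by (intro eq_vecI) (auto simp: Elem_apply f_def g h)
  then show ?thesis using Good_Elem[OF u i f fu] by blast
qed

lemma sep_dist:
  assumes l: "l \<in> I" and vl: "v $ l \<in> Fq q" and ne: "v $ l \<noteq> u $ l"
  shows "\<exists>h. polyfun q I h \<and> h v = 1 \<and> h (u :: 'a vec) = 0"
proof (cases "u $ l \<in> Fq q")
  case True
  define h where "h = (\<lambda>x::'a vec. (x $ l - u $ l) ^ (card (UNIV :: 'a set) - 1))"
  have "polyfun q I h" unfolding h_def
    by (intro polyfun_pow polyfun_sub polyfun.pvar polyfun.pconst l True)
  moreover have "h v = 1" unfolding h_def using ne by (intro nonzero_pow) simp
  moreover have "h u = 0" unfolding h_def using zero_pow by simp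
  ultimately show ?thesis by blast
next
  case False
  define h where "h = (\<lambda>x::'a vec. 1 - ((x $ l) ^ q - x $ l) ^ (card (UNIV :: 'a set) - 1))"
  have "polyfun q I h" unfolding h_def
    by (intro polyfun_pow polyfun_sub polyfun.pvar polyfun.pconst l Fq_1)
  moreover have "h v = 1" unfolding h_def using vl zero_pow by (simp add: Fq_def)
  moreover have "h u = 0" unfolding h_def using False nonzero_pow[of "(u $ l) ^ q - u $ l"]
    by (simp add: Fq_def)
  ultimately show ?thesis by blast
qed

lemma move_dist:
  assumes u: "u \<in> carrier_vec n" and v: "v \<in> carrier_vec n" and i: "i < n" and j: "j < n" "j \<noteq> i"
    and gen: "gen_field q {v $ j} = UNIV"
    and l: "l < n" "l \<noteq> i" and vl: "v $ l \<in> Fq q" and ne: "v $ l \<noteq> u $ l"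
  shows "\<exists>E. Good n u E \<and> E v = vec n (\<lambda>l. if l = i then a else v $ l)"
proof -
  obtain h where "polyfun q ({..<n} - {i}) h" "h v = 1" "h u = 0"
    using sep_dist[OF _ vl ne, of "{..<n} - {i}"] l by auto
  then show ?thesis using move[OF u v i j gen] by blast
qed

end



context ffield begin

definition Rch :: "nat \<Rightarrow> 'a vec \<Rightarrow> 'a vec \<Rightarrow> 'a vec \<Rightarrow> bool" where
  "Rch n u v w \<longleftrightarrow> (\<exists>E. Good n u E \<and> E v = w)"

lemma Rch_refl: "u \<in> carrier_vec n \<Longrightarrow> v \<in> carrier_vec n \<Longrightarrow> Rch n u v v"
  unfolding Rch_def using Good_id[of u n] by auto

lemma Rch_trans: "Rch n u v w \<Longrightarrow> Rch n u w x \<Longrightarrow> Rch n u v x"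
  unfolding Rch_def using Good_comp by fastforce

lemma Rch_carrier: "Rch n u v w \<Longrightarrow> v \<in> carrier_vec n \<Longrightarrow> w \<in> carrier_vec n"
  unfolding Rch_def Good_def by auto

lemma vec_eqI: "(\<And>t. t < n \<Longrightarrow> f t = g t) \<Longrightarrow> vec n f = vec n g"
  by (intro eq_vecI) auto

definition dd :: "'a vec \<Rightarrow> nat \<Rightarrow> 'a" where
  "dd u l = (if u $ l = 0 then 1 else 0)"

lemma dd_Fq: "dd u l \<in> Fq q" by (simp add: dd_def Fq_0 Fq_1)
lemma dd_ne: "dd u l \<noteq> u $ l" by (simp add: dd_def)

lemma move_dist':
  assumes u: "u \<in> carrier_vec n" and v: "v \<in> carrier_vec n" and i: "i < n" and j: "j < n" "j \<noteq> i"
    and gen: "gen_field q {v $ j} = UNIV"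
    and l: "l < n" "l \<noteq> i" and vl: "v $ l = dd u l"
  shows "Rch n u v (vec n (\<lambda>t. if t = i then a else v $ t))"
proof -
  have "v $ l \<in> Fq q" "v $ l \<noteq> u $ l" using vl dd_Fq dd_ne by auto
  from move_dist[OF u v i j gen l this, of a] show ?thesis unfolding Rch_def .
qed

lemma tail:
  assumes u: "u \<in> carrier_vec n" and i: "i = 1 \<or> i = 2" and n: "n \<ge> 3"
    and w: "w \<in> carrier_vec n" and gen: "gen_field q {w $ 0} = UNIV" and wi: "w $ i = dd u i"
  shows "Rch n u w (vec n (\<lambda>t. if 3 \<le> t \<and> t < K then 0 else w $ t))"
proof (induction K)
  case 0
  have "vec n (\<lambda>t. if 3 \<le> t \<and> t < 0 then 0 else w $ t) = w" using w by (intro eq_vecI) auto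
  then show ?case using Rch_refl[OF u w] by simp
next
  case (Suc K)
  define w1 where "w1 = vec n (\<lambda>t. if 3 \<le> t \<and> t < K then 0 else w $ t)"
  show ?case
  proof (cases "3 \<le> K \<and> K < n")
    case True
    have w1: "w1 \<in> carrier_vec n" by (simp add: w1_def)
    have g1: "gen_field q {w1 $ 0} = UNIV" using gen n by (simp add: w1_def)
    have "Rch n u w1 (vec n (\<lambda>t. if t = K then 0 else w1 $ t))"
      by (rule move_dist'[OF u w1, of K 0 i]) (use True i n g1 wi in \<open>auto simp: w1_def\<close>)
    moreover have "vec n (\<lambda>t. if t = K then 0 else w1 $ t) = vec n (\<lambda>t. if 3 \<le> t \<and> t < Suc K then 0 else w $ t)"
      using True by (intro vec_eqI) (auto simp: w1_def)
    ultimately have "Rch n u w1 (vec n (\<lambda>t. if 3 \<le> t \<and> t < Suc K then 0 else w $ t))" by simp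
    then show ?thesis using Rch_trans[OF Suc.IH[folded w1_def]] by blast
  next
    case False
    have "vec n (\<lambda>t. if 3 \<le> t \<and> t < K then 0 else w $ t) = vec n (\<lambda>t. if 3 \<le> t \<and> t < Suc K then 0 else w $ t)"
      using False by (intro vec_eqI) auto
    then show ?thesis using Suc.IH by simp
  qed
qed

end



context ffield begin

definition Tgt :: "nat \<Rightarrow> 'a vec \<Rightarrow> 'a \<Rightarrow> 'a vec" where
  "Tgt n u z0 = vec n (\<lambda>j. if j = 0 then dd u 0 else if j = 1 then z0 else if j = 2 then dd u 2 else 0)"

lemma phase2:
  assumes u: "u \<in> carrier_vec n" and i: "i = 1 \<or> i = 2" and n: "n \<ge> 3"
    and w: "w \<in> carrier_vec n" and gen: "gen_field q {w $ 0} = UNIV" and wi: "w $ i = dd u i"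
    and z0: "gen_field q {z0} = UNIV"
  shows "Rch n u w (Tgt n u z0)"
proof -
  define j' where "j' = 3 - i"
  have j': "j' = 1 \<or> j' = 2" "j' \<noteq> i" using i by (auto simp: j'_def)
  define w1 where "w1 = vec n (\<lambda>t. if t = j' then z0 else w $ t)"
  have r1: "Rch n u w w1" unfolding w1_def
    by (rule move_dist'[OF u w, of j' 0 i]) (use i j' n gen wi in auto)
  have w1: "w1 \<in> carrier_vec n" by (simp add: w1_def)
  have w1_0: "w1 $ 0 = w $ 0" "w1 $ i = dd u i" "w1 $ j' = z0" using n i j' wi by (auto simp: w1_def)
  define w2 where "w2 = vec n (\<lambda>t. if 3 \<le> t \<and> t < n then 0 else w1 $ t)"
  have r2: "Rch n u w1 w2" unfolding w2_def
    by (rule tail[OF u i n w1]) (use w1_0 gen in auto)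
  have w2: "w2 \<in> carrier_vec n" by (simp add: w2_def)
  have w2_0: "w2 $ 0 = w $ 0" "w2 $ i = dd u i" "w2 $ j' = z0" using n i j' w1_0 by (auto simp: w2_def)
  define w3 where "w3 = vec n (\<lambda>t. if t = 0 then dd u 0 else w2 $ t)"
  have r3: "Rch n u w2 w3" unfolding w3_def
    by (rule move_dist'[OF u w2, of 0 j' i]) (use i j' n z0 w2_0 in auto)
  have r123: "Rch n u w w3" using Rch_trans[OF Rch_trans[OF r1 r2] r3] .
  show ?thesis
  proof (cases "i = 2")
    case True
    then have "j' = 1" using j' by simp
    have "w3 = Tgt n u z0" unfolding Tgt_def w3_def w2_def w1_def
      using True \<open>j' = 1\<close> wi by (intro vec_eqI) auto
    then show ?thesis using r123 by simp
  next
    case False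
    then have i1: "i = 1" "j' = 2" using i j' by auto
    have w3: "w3 \<in> carrier_vec n" by (simp add: w3_def)
    have w3_0: "w3 $ 0 = dd u 0" "w3 $ 2 = z0" using n w2_0 i1 by (auto simp: w3_def)
    define w4 where "w4 = vec n (\<lambda>t. if t = 1 then z0 else w3 $ t)"
    have r4: "Rch n u w3 w4" unfolding w4_def
      by (rule move_dist'[OF u w3, of 1 2 0]) (use n z0 w3_0 in auto)
    have w4: "w4 \<in> carrier_vec n" by (simp add: w4_def)
    have w4_0: "w4 $ 0 = dd u 0" "w4 $ 1 = z0" using n w3_0 by (auto simp: w4_def)
    define w5 where "w5 = vec n (\<lambda>t. if t = 2 then dd u 2 else w4 $ t)"
    have r5: "Rch n u w4 w5" unfolding w5_def
      by (rule move_dist'[OF u w4, of 2 1 0]) (use n z0 w4_0 in auto)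
    have "w5 = Tgt n u z0" unfolding Tgt_def w5_def w4_def w3_def w2_def w1_def
      using i1 by (intro vec_eqI) auto
    then show ?thesis using Rch_trans[OF Rch_trans[OF r123 r4] r5] by simp
  qed
qed

end



context ffield begin

lemma first_sep:
  assumes u: "u \<in> carrier_vec n" and v: "v \<in> carrier_vec n" and n: "n \<ge> 3"
    and gen: "gen_field q {v $ 0} = UNIV" and ne: "\<forall>k. v \<noteq> fr k u"
  shows "\<exists>i. (i = 1 \<or> i = 2) \<and> (\<exists>h. polyfun q ({..<n} - {i}) h \<and> h v = 1 \<and> h u = 0)"
proof (cases "\<exists>k. v $ 0 = (u $ 0) ^ (q ^ k)")
  case True
  then obtain k where k: "v $ 0 = (u $ 0) ^ (q ^ k)" by blast
  have "\<exists>l<n. v $ l \<noteq> (u $ l) ^ (q ^ k)"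
  proof (rule ccontr)
    assume "\<not> ?thesis"
    then have "v = fr k u" using u v by (intro eq_vecI) (auto simp: fr_def)
    then show False using ne by blast
  qed
  then obtain l where l: "l < n" "v $ l \<noteq> (u $ l) ^ (q ^ k)" by blast
  have l0: "l \<noteq> 0" using k l by (metis)
  obtain G where G: "polyfun q {0} G" "G v = v $ l"
    using generator[OF gen, of "{0}" "v $ l"] by auto
  define i where "i = (if l = 1 then 2 else (1::nat))"
  have i: "i = 1 \<or> i = 2" "i \<noteq> l" "i \<noteq> 0" by (auto simp: i_def)
  define h where "h = (\<lambda>x::'a vec. 1 - (x $ l - G x) ^ (card (UNIV :: 'a set) - 1))"
  have GI: "polyfun q ({..<n} - {i}) G" by (rule polyfun_mono[OF G(1)]) (use i n in auto)
  have "polyfun q ({..<n} - {i}) h" unfolding h_def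
    by (intro polyfun_sub polyfun_pow polyfun.pconst Fq_1 polyfun.pvar GI) (use l i in auto)
  moreover have "h v = 1" unfolding h_def using G zero_pow by simp
  moreover have "h u = 0"
  proof -
    have Gf: "G (fr k u) = (G u) ^ (q ^ k)" unfolding fr_def
      by (rule polyfun_frob[OF G(1)]) (use u n in auto)
    have "G (fr k u) = G v" by (rule polyfun_local[OF G(1)]) (use u n k in \<open>auto simp: fr_def\<close>)
    then have "(u $ l - G u) ^ (q ^ k) = (u $ l) ^ (q ^ k) - v $ l"
      using Gf G(2) by (simp add: sub_pow)
    then have "(u $ l - G u) ^ (q ^ k) \<noteq> 0" using l by simp
    then have "u $ l - G u \<noteq> 0" using q_pos by auto
    then show ?thesis unfolding h_def using nonzero_pow by simp
  qed
  ultimately show ?thesis using i by blast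
next
  case False
  obtain Q where Q: "polyfun q ({..<n} - {1}) Q" "\<forall>x. Q x = (\<Prod>k<m. x $ 0 - (u $ 0) ^ (q ^ k))"
    using minpoly_exists[of 0 "{..<n} - {1}" "u $ 0"] n by auto
  have "Q u = 0" using Q(2) mpos by (auto intro!: bexI[of _ 0])
  moreover have "Q v \<noteq> 0" using Q(2) False by auto
  moreover define h where "h = (\<lambda>x::'a vec. (Q x) ^ (card (UNIV :: 'a set) - 1))"
  ultimately have "h v = 1" "h u = 0" using nonzero_pow zero_pow by (auto simp: h_def)
  moreover have "polyfun q ({..<n} - {1}) h" unfolding h_def by (rule polyfun_pow[OF Q(1)])
  ultimately show ?thesis by blast
qed

lemma reach_T:
  assumes u: "u \<in> carrier_vec n" and v: "v \<in> carrier_vec n" and n: "n \<ge> 3"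
    and gen: "gen_field q {v $ 0} = UNIV" and ne: "\<forall>k. v \<noteq> fr k u"
    and z0: "gen_field q {z0} = UNIV"
  shows "Rch n u v (Tgt n u z0)"
proof -
  obtain i h where i: "i = 1 \<or> i = 2" and h: "polyfun q ({..<n} - {i}) h" "h v = 1" "h u = 0"
    using first_sep[OF u v n gen ne] by blast
  define w where "w = vec n (\<lambda>t. if t = i then dd u i else v $ t)"
  have r: "Rch n u v w" unfolding Rch_def w_def
    by (rule move[OF u v _ _ _ gen h]) (use i n in auto)
  have "Rch n u w (Tgt n u z0)"
    by (rule phase2[OF u i n _ _ _ z0]) (use i n gen in \<open>auto simp: w_def\<close>)
  then show ?thesis using Rch_trans[OF r] by blast
qed

end



context ffield begin

lemma gal_orbit_fr: "gal_orbit q x = {fr k x | k. True}"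
  by (simp add: gal_orbit_def fr_def)

lemma fr_fr: "x \<in> carrier_vec n \<Longrightarrow> fr j (fr k x) = fr (k + j) x"
  by (intro eq_vecI) (auto simp: fr_def pow_pow)

lemma fr_period: "x \<in> carrier_vec n \<Longrightarrow> fr (m * c + j) x = fr j x"
proof (intro eq_vecI)
  fix i assume "x \<in> carrier_vec n" "i < dim_vec (fr j x)"
  then show "fr (m * c + j) x $ i = fr j x $ i"
    using pow_pow[of "x $ i" "m * c" j] period_mult[of "x $ i" c] by (simp add: fr_def)
qed (simp add: fr_def)

lemma orbit_same:
  assumes x: "x \<in> carrier_vec n" shows "gal_orbit q (fr k x) = gal_orbit q x"
  unfolding gal_orbit_fr
proof (intro equalityI subsetI)
  fix y assume "y \<in> {fr j (fr k x) | j. True}"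
  then obtain j where "y = fr j (fr k x)" by blast
  then have "y = fr (k + j) x" using fr_fr[OF x] by simp
  then show "y \<in> {fr j x | j. True}" by blast
next
  fix y assume "y \<in> {fr j x | j. True}"
  then obtain j where y: "y = fr j x" by blast
  have "fr j x = fr (m * k + j) x" using fr_period[OF x] by simp
  also have "\<dots> = fr (k + (m * k + j - k)) x"
  proof -
    have "1 \<le> m" using mpos by simp
    then have "1 * k \<le> m * k" by (rule mult_le_mono1)
    then have "k + (m * k + j - k) = m * k + j" by linarith
    then show ?thesis by simp
  qed
  also have "\<dots> = fr (m * k + j - k) (fr k x)" using fr_fr[OF x] by simp
  finally show "y \<in> {fr j (fr k x) | j. True}" using y by blast
qed

end

theorem mainTheorem12:
  fixes q m n :: nat and s r u :: "'a::{field,finite} vec"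
  assumes "\<exists>p k. prime p \<and> k > 0 \<and> q = p ^ k"
    and "m > 0"
    and "card (UNIV :: 'a set) = q ^ m"
    and "n \<ge> 3"
    and "s \<in> calX q m n" and "r \<in> calX q m n" and "u \<in> calX q m n"
    and "gal_orbit q s \<noteq> gal_orbit q r"
    and "gal_orbit q s \<noteq> gal_orbit q u"
    and "gal_orbit q r \<noteq> gal_orbit q u"
    and "gen_field q {r $ 0} = UNIV"
    and "gen_field q {s $ 0} = UNIV"
  shows "\<exists>F. tame q n F \<and> F ` gal_orbit q r = gal_orbit q s \<and> F ` gal_orbit q u = gal_orbit q u"
proof -
  interpret ffield q m "TYPE('a)" using assms(1-3) by unfold_locales
  have r: "r \<in> carrier_vec n" and s: "s \<in> carrier_vec n" and u: "u \<in> carrier_vec n"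
    using assms(5-7) by (auto simp: calX_def)
  have rne: "\<forall>k. r \<noteq> fr k u" using orbit_same[OF u] assms(10) by metis
  have sne: "\<forall>k. s \<noteq> fr k u" using orbit_same[OF u] assms(9) by metis
  define T where "T = Tgt n u (r $ 0)"
  obtain Er where Er: "Good n u Er" "Er r = T"
    using reach_T[OF u r assms(4) assms(11) rne assms(11)] unfolding Rch_def T_def by blast
  obtain Es where Es: "Good n u Es" "Es s = T"
    using reach_T[OF u s assms(4) assms(12) sne assms(11)] unfolding Rch_def T_def by blast
  define F where "F = inv_into (carrier_vec n) Es \<circ> Er"
  have tF: "tame q n F" unfolding F_def
    using Er(1) Es(1) unfolding Good_def by (blast intro: tame.comp tame.inverse)
  have inj: "inj_on Es (carrier_vec n)" using Es(1) unfolding Good_def by blast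
  have inv: "inv_into (carrier_vec n) Es (Es y) = y" if "y \<in> carrier_vec n" for y
    using inv_into_f_f[OF inj that] .
  have comE: "Er (fr k x) = fr k (Er x)" "Es (fr k x) = fr k (Es x)" if "x \<in> carrier_vec n" for x k
    using Er(1) Es(1) that unfolding Good_def by blast+
  have Fr: "F (fr k r) = fr k s" for k
  proof -
    have "Er (fr k r) = Es (fr k s)" using comE[OF r] comE[OF s] Er(2) Es(2) by simp
    then show ?thesis unfolding F_def using inv[OF fr_carrier[OF s]] by simp
  qed
  have Fu: "F (fr k u) = fr k u" for k
  proof -
    have "Er (fr k u) = Es (fr k u)" using comE[OF u] Er(1) Es(1) unfolding Good_def by simp
    then show ?thesis unfolding F_def using inv[OF fr_carrier[OF u]] by simp
  qed
  have "F ` gal_orbit q r = gal_orbit q s" unfolding gal_orbit_fr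
  proof (intro equalityI subsetI)
    fix y assume "y \<in> F ` {fr k r |k. True}"
    then show "y \<in> {fr k s |k. True}" using Fr by auto
  next
    fix y assume "y \<in> {fr k s |k. True}"
    then obtain k where "y = fr k s" by blast
    then have "y = F (fr k r)" using Fr by simp
    then show "y \<in> F ` {fr k r |k. True}" by blast
  qed
  moreover have "F ` gal_orbit q u = gal_orbit q u" unfolding gal_orbit_fr
  proof (intro equalityI subsetI)
    fix y assume "y \<in> F ` {fr k u |k. True}"
    then show "y \<in> {fr k u |k. True}" using Fu by auto
  next
    fix y assume "y \<in> {fr k u |k. True}"
    then obtain k where "y = fr k u" by blast
    then have "y = F (fr k u)" using Fu by simp
    then show "y \<in> F ` {fr k u |k. True}" by blast
  qed
  ultimately show ?thesis using tF by blast
qed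


end
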